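(* Let ${\mathbf{X}}\in\mathbb{R}_+^{m\times n}$, let ${\mathbf{A}}\in\mathbb{R}^{k\times m}$ satisfy ${\mathbf{A}}{\mathbf{A}}^T={\mathbf{I}}_k$, let $\lambda\in[0,1]$ and $\sigma\ge\max_{a,b}\big(({\mathbf{A}}^T{\mathbf{A}})_{ab}\big)_-$. Then for entrywise nonnegative ${\mathbf{U}}\in\mathbb{R}^{m\times r}$, ${\mathbf{V}}\in\mathbb{R}^{n\times r}$ (with denominators below entrywise positive), the objective $$\|{\mathbf{A}}({\mathbf{X}}-{\mathbf{U}}{\mathbf{V}}^T)\|_F^2+\lambda\|({\mathbf{I}}_m-{\mathbf{A}}^T{\mathbf{A}}){\mathbf{U}}{\mathbf{V}}^T\|_F^2+\sigma\|\mathbf{1}^T({\mathbf{X}}-{\mathbf{U}}{\mathbf{V}}^T)\|_2^2$$ does not increase under each of the updates $${\mathbf{U}}\leftarrow{\mathbf{U}}\circ\frac{{\mathbf{A}}^T{\mathbf{A}}{\mathbf{X}}{\mathbf{V}}+\sigma\mathbf{1}\mathbf{1}^T{\mathbf{X}}{\mathbf{V}}}{(1-\lambda){\mathbf{A}}^T{\mathbf{A}}{\mathbf{U}}{\mathbf{V}}^T{\mathbf{V}}+\sigma\mathbf{1}\mathbf{1}^T{\mathbf{U}}{\mathbf{V}}^T{\mathbf{V}}+\lambda{\mathbf{U}}{\mathbf{V}}^T{\mathbf{V}}},$$ $${\mathbf{V}}\leftarrow{\mathbf{V}}\circ\frac{{\mathbf{X}}^T{\mathbf{A}}^T{\mathbf{A}}{\mathbf{U}}+\sigma{\mathbf{X}}^T\mathbf{1}\mathbf{1}^T{\mathbf{U}}}{(1-\lambda){\mathbf{V}}{\mathbf{U}}^T{\mathbf{A}}^T{\mathbf{A}}{\mathbf{U}}+\sigma{\mathbf{V}}{\mathbf{U}}^T\mathbf{1}\mathbf{1}^T{\mathbf{U}}+\lambda{\mathbf{V}}{\mathbf{U}}^T{\mathbf{U}}},$$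 and the updated factors remain entrywise nonnegative.
   Context: $\mathbf{1}\in\mathbb{R}^m$ is the all-ones vector; $(x)_-=-\min(x,0)$; $\circ$ is entrywise product and the fraction bar is entrywise division; $\mathbb{R}_+^{m\times n}$ denotes entrywise nonnegative matrices. $\|\cdot\|_F$ is the Frobenius norm, $\|\cdot\|_2$ the Euclidean norm. *)

theory Defs
  imports "HOL-Analysis.Analysis"
begin

text \<open>Matrices are HOL-Analysis matrices: a p x q real matrix has type real^'q^'p
  (rows indexed by 'p). ** is matrix product, transpose, mat 1 the identity.\<close>

definition frob_sq :: "real^'q^'p \<Rightarrow> real" where
  "frob_sq M = (\<Sum>i\<in>UNIV. \<Sum>j\<in>UNIV. (M $ i $ j)^2)"

definition ones_mat :: "real^'q^'p" where
  "ones_mat = (\<chi> i j. 1)"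

definition nonneg_mat :: "real^'q^'p \<Rightarrow> bool" where
  "nonneg_mat M \<longleftrightarrow> (\<forall>i j. 0 \<le> M $ i $ j)"

definition pos_mat :: "real^'q^'p \<Rightarrow> bool" where
  "pos_mat M \<longleftrightarrow> (\<forall>i j. 0 < M $ i $ j)"

definition mult_update :: "real^'q^'p \<Rightarrow> real^'q^'p \<Rightarrow> real^'q^'p \<Rightarrow> real^'q^'p" where
  "mult_update U N D = (\<chi> i j. U $ i $ j * N $ i $ j / D $ i $ j)"

text \<open>The objective
  ||A(X - U V^T)||_F^2 + lambda ||(I - A^T A) U V^T||_F^2 + sigma ||1^T (X - U V^T)||_2^2.
  1^T M is the row vector of column sums of M; its squared 2-norm is the sum of
  squared column sums.\<close>
definition objective ::
  "real^'m^'k \<Rightarrow> real^'n^'m \<Rightarrow> real \<Rightarrow> real \<Rightarrow> real^'r^'m \<Rightarrow> real^'r^'n \<Rightarrow> real" where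
  "objective A X lam sig U V =
     frob_sq (A ** (X - U ** transpose V))
     + lam * frob_sq ((mat 1 - transpose A ** A) ** (U ** transpose V))
     + sig * (\<Sum>j\<in>UNIV. (\<Sum>i\<in>UNIV. (X - U ** transpose V) $ i $ j)^2)"

definition numer_U ::
  "real^'m^'k \<Rightarrow> real^'n^'m \<Rightarrow> real \<Rightarrow> real \<Rightarrow> real^'r^'m \<Rightarrow> real^'r^'n \<Rightarrow> real^'r^'m" where
  "numer_U A X lam sig U V =
     transpose A ** A ** X ** V + sig *\<^sub>R ((ones_mat :: real^'m^'m) ** X ** V)"

definition denom_U ::
  "real^'m^'k \<Rightarrow> real^'n^'m \<Rightarrow> real \<Rightarrow> real \<Rightarrow> real^'r^'m \<Rightarrow> real^'r^'n \<Rightarrow> real^'r^'m" where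
  "denom_U A X lam sig U V =
     (1 - lam) *\<^sub>R (transpose A ** A ** U ** transpose V ** V)
     + sig *\<^sub>R ((ones_mat :: real^'m^'m) ** U ** transpose V ** V)
     + lam *\<^sub>R (U ** transpose V ** V)"

definition numer_V ::
  "real^'m^'k \<Rightarrow> real^'n^'m \<Rightarrow> real \<Rightarrow> real \<Rightarrow> real^'r^'m \<Rightarrow> real^'r^'n \<Rightarrow> real^'r^'n" where
  "numer_V A X lam sig U V =
     transpose X ** transpose A ** A ** U + sig *\<^sub>R (transpose X ** (ones_mat :: real^'m^'m) ** U)"

definition denom_V ::
  "real^'m^'k \<Rightarrow> real^'n^'m \<Rightarrow> real \<Rightarrow> real \<Rightarrow> real^'r^'m \<Rightarrow> real^'r^'n \<Rightarrow> real^'r^'n" where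
  "denom_V A X lam sig U V =
     (1 - lam) *\<^sub>R (V ** transpose U ** transpose A ** A ** U)
     + sig *\<^sub>R (V ** transpose U ** (ones_mat :: real^'m^'m) ** U)
     + lam *\<^sub>R (V ** transpose U ** U)"

end

theory Submission
  imports Defs
begin


lemma mm_add_r: "((A::real^'n^'m) + B) ** (C::real^'p^'n) = A ** C + B ** C"
  by (vector matrix_matrix_mult_def sum.distrib[symmetric] field_simps)
lemma mm_diff_r: "((A::real^'n^'m) - B) ** (C::real^'p^'n) = A ** C - B ** C"
  by (vector matrix_matrix_mult_def sum_subtractf[symmetric] field_simps)
lemma mm_diff_l: "(A::real^'n^'m) ** ((B::real^'p^'n) - C) = A ** B - A ** C"
  by (vector matrix_matrix_mult_def sum_subtractf[symmetric] field_simps)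
lemma transpose_add: "transpose ((A::real^'n^'m) + B) = transpose A + transpose B"
  by (vector transpose_def)
lemma transpose_diff: "transpose ((A::real^'n^'m) - B) = transpose A - transpose B"
  by (vector transpose_def)

lemma sum3_rev: "(\<Sum>a\<in>A. \<Sum>b\<in>B. \<Sum>c\<in>C. f a b c) = (\<Sum>c\<in>C. \<Sum>b\<in>B. \<Sum>a\<in>A. f a b c)"
proof -
  have "(\<Sum>a\<in>A. \<Sum>b\<in>B. \<Sum>c\<in>C. f a b c) = (\<Sum>a\<in>A. \<Sum>c\<in>C. \<Sum>b\<in>B. f a b c)"
    by (rule sum.cong[OF refl], rule sum.swap)
  also have "\<dots> = (\<Sum>c\<in>C. \<Sum>a\<in>A. \<Sum>b\<in>B. f a b c)" by (rule sum.swap)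
  also have "\<dots> = (\<Sum>c\<in>C. \<Sum>b\<in>B. \<Sum>a\<in>A. f a b c)"
    by (rule sum.cong[OF refl], rule sum.swap)
  finally show ?thesis .
qed
lemma sum3_rot: "(\<Sum>a\<in>A. \<Sum>b\<in>B. \<Sum>c\<in>C. f a b c) = (\<Sum>b\<in>B. \<Sum>c\<in>C. \<Sum>a\<in>A. f a b c)"
proof -
  have "(\<Sum>a\<in>A. \<Sum>b\<in>B. \<Sum>c\<in>C. f a b c) = (\<Sum>b\<in>B. \<Sum>a\<in>A. \<Sum>c\<in>C. f a b c)"
    by (rule sum.swap)
  also have "\<dots> = (\<Sum>b\<in>B. \<Sum>c\<in>C. \<Sum>a\<in>A. f a b c)"
    by (rule sum.cong[OF refl], rule sum.swap)
  finally show ?thesis .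
qed

lemma frob_inner: "frob_sq M = inner M M"
  by (simp add: frob_sq_def inner_vec_def power2_eq_square)

lemma adj_l: "inner ((A::real^'n^'m) ** (B::real^'p^'n)) C = inner B (transpose A ** C)"
  apply (simp add: inner_vec_def matrix_matrix_mult_def transpose_def sum_distrib_left sum_distrib_right ac_simps)
  by (rule sum3_rev)

lemma adj_r: "inner ((A::real^'n^'m) ** (B::real^'p^'n)) C = inner A (C ** transpose B)"
  apply (simp add: inner_vec_def matrix_matrix_mult_def transpose_def sum_distrib_left sum_distrib_right ac_simps)
  by (rule sum.cong[OF refl], rule sum.swap)

lemma inner_transpose: "inner (transpose (A::real^'n^'m)) B = inner A (transpose B)"
  apply (simp add: inner_vec_def transpose_def)
  by (rule sum.swap)



lemma sum4_rev: "(\<Sum>a\<in>A. \<Sum>b\<in>B. \<Sum>c\<in>C. \<Sum>d\<in>D. f a b c d) = (\<Sum>d\<in>D. \<Sum>c\<in>C. \<Sum>b\<in>B. \<Sum>a\<in>A. f a b c d)"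
proof -
  have "(\<Sum>a\<in>A. \<Sum>b\<in>B. \<Sum>c\<in>C. \<Sum>d\<in>D. f a b c d) = (\<Sum>a\<in>A. \<Sum>d\<in>D. \<Sum>c\<in>C. \<Sum>b\<in>B. f a b c d)"
    by (rule sum.cong[OF refl], rule sum3_rev)
  also have "\<dots> = (\<Sum>d\<in>D. \<Sum>c\<in>C. \<Sum>b\<in>B. \<Sum>a\<in>A. f a b c d)"
  proof -
    have "(\<Sum>a\<in>A. \<Sum>d\<in>D. \<Sum>c\<in>C. \<Sum>b\<in>B. f a b c d) = (\<Sum>d\<in>D. \<Sum>a\<in>A. \<Sum>c\<in>C. \<Sum>b\<in>B. f a b c d)"
      by (rule sum.swap)
    also have "\<dots> = (\<Sum>d\<in>D. \<Sum>c\<in>C. \<Sum>b\<in>B. \<Sum>a\<in>A. f a b c d)"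
      by (rule sum.cong[OF refl], rule sum3_rot)
    finally show ?thesis .
  qed
  finally show ?thesis .
qed

lemma pair_bound:
  fixes h ux uy dx dy tx ty :: real
  assumes "0 \<le> h" "0 \<le> ux" "0 \<le> uy" "ux = 0 \<Longrightarrow> dx = 0" "uy = 0 \<Longrightarrow> dy = 0"
    and "tx = (if ux > 0 then dx^2/ux else 0)" "ty = (if uy > 0 then dy^2/uy else 0)"
  shows "h * (dx * dy) \<le> (h * uy * tx + h * ux * ty) / 2"
proof -
  have "dx * dy \<le> (uy * tx + ux * ty) / 2"
  proof (cases "ux > 0 \<and> uy > 0")
    case True
    then have "0 \<le> (uy*dx - ux*dy)^2 / (ux*uy)" by simp
    moreover have "(uy*dx - ux*dy)^2 / (ux*uy) = uy * (dx^2/ux) + ux*(dy^2/uy) - 2*(dx*dy)"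
      using True by (simp add: field_simps power2_eq_square)
    ultimately show ?thesis using True assms(6,7) by simp
  next
    case False
    then have "dx = 0 \<or> dy = 0" using assms by force
    moreover have "0 \<le> tx" "0 \<le> ty" using assms by auto
    ultimately show ?thesis using assms(2,3) by (auto intro: add_nonneg_nonneg mult_nonneg_nonneg)
  qed
  then have "h * (dx * dy) \<le> h * ((uy * tx + ux * ty) / 2)" using assms(1) by (rule mult_left_mono)
  then show ?thesis by (simp add: algebra_simps)
qed

lemma lin_aux:
  fixes x D d n :: real
  assumes "x > 0" "D > 0" "d = x*n/D - x"
  shows "d*(D-n) = -(D*(d^2/x))"
proof -
  have "n = D*(d+x)/x" using assms by (simp add: field_simps)
  then show ?thesis using assms(1,2) by (simp add: field_simps power2_eq_square)
qed

lemma mu_step: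
  fixes Q :: "real^'p^'p" and G :: "real^'r^'r" and U N :: "real^'r^'p"
  assumes Qs: "transpose Q = Q" and Gs: "transpose G = G" and Qn: "nonneg_mat Q" and Gn: "nonneg_mat G"
    and Un: "nonneg_mat U" and Dp: "pos_mat (Q ** U ** G)"
  shows "2 * inner (mult_update U N (Q ** U ** G) - U) (Q ** U ** G - N)
         + inner (mult_update U N (Q ** U ** G) - U) (Q ** (mult_update U N (Q ** U ** G) - U) ** G) \<le> 0"
proof -
  define Dn where "Dn = Q ** U ** G"
  define \<Delta> where "\<Delta> = mult_update U N Dn - U"
  define t where "t a p = (if U$a$p > 0 then (\<Delta>$a$p)^2 / U$a$p else 0)" for a p
  have Qsym: "Q$a$b = Q$b$a" for a b using Qs by (metis transpose_def vec_lambda_beta)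
  have Gsym: "G$a$b = G$b$a" for a b using Gs by (metis transpose_def vec_lambda_beta)
  have Un': "0 \<le> U$a$p" for a p using Un by (simp add: nonneg_mat_def)
  have Qn': "0 \<le> Q$a$b" for a b using Qn by (simp add: nonneg_mat_def)
  have Gn': "0 \<le> G$a$b" for a b using Gn by (simp add: nonneg_mat_def)
  have Dpos: "0 < Dn$a$p" for a p using Dp by (simp add: pos_mat_def Dn_def)
  have D0: "U$a$p = 0 \<Longrightarrow> \<Delta>$a$p = 0" for a p by (simp add: \<Delta>_def mult_update_def)
  have lin: "\<Delta>$a$p * (Dn$a$p - N$a$p) = - (Dn$a$p * t a p)" for a p
  proof (cases "U$a$p > 0")
    case True
    have "\<Delta>$a$p = U$a$p * N$a$p / Dn$a$p - U$a$p" by (simp add: \<Delta>_def mult_update_def)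
    then show ?thesis using True Dpos[of a p] lin_aux[of "U$a$p" "Dn$a$p" "\<Delta>$a$p" "N$a$p"]
      by (simp add: t_def)
  next
    case False
    then have "U$a$p = 0" using Un'[of a p] by simp
    then show ?thesis using D0 by (simp add: t_def)
  qed
  have Dn_e: "Dn$a$p = (\<Sum>q\<in>UNIV. \<Sum>b\<in>UNIV. Q$a$b * G$q$p * U$b$q)" for a p
    by (simp add: Dn_def matrix_matrix_mult_def sum_distrib_right sum_distrib_left ac_simps)
  have quad_e: "inner \<Delta> (Q ** \<Delta> ** G) = (\<Sum>a\<in>UNIV. \<Sum>p\<in>UNIV. \<Sum>q\<in>UNIV. \<Sum>b\<in>UNIV. Q$a$b * G$q$p * (\<Delta>$a$p * \<Delta>$b$q))"
    by (simp add: inner_vec_def matrix_matrix_mult_def sum_distrib_right sum_distrib_left ac_simps)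
  define f where "f a p q b = Q$a$b * G$q$p * U$b$q * t a p" for a p q b
  have S1: "(\<Sum>a\<in>UNIV. \<Sum>p\<in>UNIV. \<Sum>q\<in>UNIV. \<Sum>b\<in>UNIV. f a p q b) = (\<Sum>a\<in>UNIV. \<Sum>p\<in>UNIV. Dn$a$p * t a p)"
    by (simp add: Dn_e f_def sum_distrib_right)
  have S2: "(\<Sum>a\<in>UNIV. \<Sum>p\<in>UNIV. \<Sum>q\<in>UNIV. \<Sum>b\<in>UNIV. Q$a$b * G$q$p * U$a$p * t b q)
        = (\<Sum>a\<in>UNIV. \<Sum>p\<in>UNIV. \<Sum>q\<in>UNIV. \<Sum>b\<in>UNIV. f a p q b)"
  proof -
    have "(\<Sum>a\<in>UNIV. \<Sum>p\<in>UNIV. \<Sum>q\<in>UNIV. \<Sum>b\<in>UNIV. Q$a$b * G$q$p * U$a$p * t b q)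
        = (\<Sum>a\<in>UNIV. \<Sum>p\<in>UNIV. \<Sum>q\<in>UNIV. \<Sum>b\<in>UNIV. f b q p a)"
      by (simp add: f_def Qsym Gsym ac_simps)
    also have "\<dots> = (\<Sum>b\<in>UNIV. \<Sum>q\<in>UNIV. \<Sum>p\<in>UNIV. \<Sum>a\<in>UNIV. f b q p a)"
      by (rule sum4_rev)
    finally show ?thesis .
  qed
  have "inner \<Delta> (Q ** \<Delta> ** G) \<le> (\<Sum>a\<in>UNIV. \<Sum>p\<in>UNIV. \<Sum>q\<in>UNIV. \<Sum>b\<in>UNIV.
          (Q$a$b * G$q$p * U$b$q * t a p + Q$a$b * G$q$p * U$a$p * t b q) / 2)"
    unfolding quad_e
    apply (intro sum_mono)
    apply (rule pair_bound)
    using Qn' Gn' Un' D0 by (auto simp: t_def intro: mult_nonneg_nonneg)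
  also have "\<dots> = (\<Sum>a\<in>UNIV. \<Sum>p\<in>UNIV. Dn$a$p * t a p)"
    using S1 S2 by (simp add: sum.distrib sum_divide_distrib[symmetric] f_def)
  finally have quad: "inner \<Delta> (Q ** \<Delta> ** G) \<le> (\<Sum>a\<in>UNIV. \<Sum>p\<in>UNIV. Dn$a$p * t a p)" .
  have linsum: "inner \<Delta> (Dn - N) = - (\<Sum>a\<in>UNIV. \<Sum>p\<in>UNIV. Dn$a$p * t a p)"
    by (simp add: inner_vec_def lin sum_negf)
  have "0 \<le> (\<Sum>a\<in>UNIV. \<Sum>p\<in>UNIV. Dn$a$p * t a p)"
    using Dpos by (intro sum_nonneg) (auto simp: t_def less_imp_le)
  then show ?thesis using quad linsum by (simp add: Dn_def \<Delta>_def)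
qed



lemma sym_swap:
  fixes S :: "real^'m^'m" and Y Z :: "real^'n^'m"
  assumes "transpose S = S"
  shows "inner Y (S ** Z) = inner Z (S ** Y)"
  by (metis adj_l assms inner_commute)

lemma q_add:
  fixes S :: "real^'m^'m" and Y Z :: "real^'n^'m"
  assumes "transpose S = S"
  shows "inner (Y + Z) (S ** (Y + Z)) = inner Y (S ** Y) + 2 * inner Z (S ** Y) + inner Z (S ** Z)"
  using sym_swap[OF assms, of Y Z]
  by (simp add: matrix_add_ldistrib inner_add_left inner_add_right)

lemma q_diff:
  fixes S :: "real^'m^'m" and Y Z :: "real^'n^'m"
  assumes "transpose S = S"
  shows "inner (Y - Z) (S ** (Y - Z)) = inner Y (S ** Y) - 2 * inner Z (S ** Y) + inner Z (S ** Z)"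
  using sym_swap[OF assms, of Y Z]
  by (simp add: mm_diff_l inner_diff_left inner_diff_right)

lemma colsum:
  fixes E :: "real^'n^'m"
  shows "(\<Sum>j\<in>UNIV. (\<Sum>i\<in>UNIV. E$i$j)^2) = inner E ((ones_mat::real^'m^'m) ** E)"
proof -
  have "inner E ((ones_mat::real^'m^'m) ** E) = (\<Sum>i\<in>UNIV. \<Sum>j\<in>UNIV. E$i$j * (\<Sum>k\<in>UNIV. E$k$j))"
    by (simp add: inner_vec_def matrix_matrix_mult_def ones_mat_def)
  also have "\<dots> = (\<Sum>j\<in>UNIV. \<Sum>i\<in>UNIV. E$i$j * (\<Sum>k\<in>UNIV. E$k$j))" by (rule sum.swap)
  also have "\<dots> = (\<Sum>j\<in>UNIV. (\<Sum>i\<in>UNIV. E$i$j)^2)"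
    by (simp add: power2_eq_square sum_distrib_right)
  finally show ?thesis by simp
qed

lemma ones_sym: "transpose (ones_mat::real^'m^'m) = ones_mat"
  by (vector transpose_def ones_mat_def)

lemma nonneg_mul: "nonneg_mat (A::real^'n^'m) \<Longrightarrow> nonneg_mat (B::real^'p^'n) \<Longrightarrow> nonneg_mat (A ** B)"
  by (auto simp: nonneg_mat_def matrix_matrix_mult_def intro!: sum_nonneg)

lemma nonneg_update: "nonneg_mat U \<Longrightarrow> nonneg_mat N \<Longrightarrow> pos_mat D \<Longrightarrow> nonneg_mat (mult_update U N D)"
  by (auto simp: nonneg_mat_def pos_mat_def mult_update_def less_imp_le)



lemma nonneg_transpose: "nonneg_mat M \<Longrightarrow> nonneg_mat (transpose M)"
  by (simp add: nonneg_mat_def transpose_def)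

lemmas mnorm = mm_add_r matrix_add_ldistrib mm_diff_r mm_diff_l scalar_matrix_assoc[symmetric]
  matrix_scalar_ac matrix_mul_assoc matrix_mul_lid matrix_mul_rid

theorem mainTheorem9:
  fixes X :: "real^'n^'m" and A :: "real^'m^'k" and U :: "real^'r^'m" and V :: "real^'r^'n"
    and lam sig :: real
  assumes X_nonneg: "nonneg_mat X"
    and A_orth: "A ** transpose A = mat 1"
    and lam: "0 \<le> lam" "lam \<le> 1"
    and sig: "\<forall>a b. max 0 (- ((transpose A ** A) $ a $ b)) \<le> sig"
    and U_nonneg: "nonneg_mat U" and V_nonneg: "nonneg_mat V"
    and DU_pos: "pos_mat (denom_U A X lam sig U V)"
    and DV_pos: "pos_mat (denom_V A X lam sig U V)"
  shows "objective A X lam sig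
           (mult_update U (numer_U A X lam sig U V) (denom_U A X lam sig U V)) V
           \<le> objective A X lam sig U V
       \<and> nonneg_mat (mult_update U (numer_U A X lam sig U V) (denom_U A X lam sig U V))
       \<and> objective A X lam sig
           U (mult_update V (numer_V A X lam sig U V) (denom_V A X lam sig U V))
           \<le> objective A X lam sig U V
       \<and> nonneg_mat (mult_update V (numer_V A X lam sig U V) (denom_V A X lam sig U V))"
proof -
  define P where "P = transpose A ** A"
  define J where "J = (ones_mat::real^'m^'m)"
  define M where "M = mat 1 - P"
  define Q where "Q = (1-lam) *\<^sub>R P + sig *\<^sub>R J + lam *\<^sub>R mat 1"
  define objW where "objW W = inner (X - W) (P ** (X-W)) + lam * inner W (M ** W) + sig * inner (X-W) (J ** (X-W))" for W :: "real^'n^'m"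
  define L where "L W = lam *\<^sub>R (M ** W) - P ** (X - W) - sig *\<^sub>R (J ** (X - W))" for W :: "real^'n^'m"
  have Psym: "transpose P = P" by (simp add: P_def matrix_transpose_mul)
  have PP: "P ** P = P"
  proof -
    have "P ** P = transpose A ** (A ** transpose A) ** A" by (simp add: P_def matrix_mul_assoc)
    then show ?thesis by (simp add: A_orth P_def)
  qed
  have Jsym: "transpose J = J" by (simp add: J_def ones_sym)
  have Msym: "transpose M = M" by (simp add: M_def transpose_diff Psym)
  have MM: "M ** M = M" by (simp add: M_def mm_diff_l mm_diff_r PP)
  have Qsym: "transpose Q = Q" by (simp add: Q_def transpose_add transpose_scalar Psym Jsym)
  have obj_eq: "objective A X lam sig U' V' = objW (U' ** transpose V')" for U' :: "real^'r^'m" and V' :: "real^'r^'n"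
  proof -
    have 1: "inner (A ** E) (A ** E) = inner E (P ** E)" for E :: "real^'n^'m"
      by (simp add: adj_l P_def matrix_mul_assoc)
    have 2: "inner (M ** W) (M ** W) = inner W (M ** W)" for W :: "real^'n^'m"
      by (simp add: adj_l Msym matrix_mul_assoc MM)
    show ?thesis unfolding objective_def objW_def frob_inner colsum 1
      using 2 by (simp add: M_def P_def J_def)
  qed
  have diff: "objW (W + D) = objW W + 2 * inner D (L W) + inner D (Q ** D)" for W D :: "real^'n^'m"
  proof -
    have e: "X - (W + D) = (X - W) - D" by simp
    have qD: "inner D (Q ** D) = (1-lam) * inner D (P ** D) + sig * inner D (J ** D) + lam * inner D D"
      by (simp add: Q_def mnorm inner_add_right)
    have mD: "inner D (M ** D) = inner D D - inner D (P ** D)"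
      by (simp add: M_def mm_diff_r inner_diff_right)
    have a: "inner (X-(W+D)) (P ** (X-(W+D))) = inner (X-W) (P ** (X-W)) - 2 * inner D (P ** (X-W)) + inner D (P ** D)"
      unfolding e by (rule q_diff[OF Psym])
    have b: "inner (X-(W+D)) (J ** (X-(W+D))) = inner (X-W) (J ** (X-W)) - 2 * inner D (J ** (X-W)) + inner D (J ** D)"
      unfolding e by (rule q_diff[OF Jsym])
    have c: "inner (W+D) (M ** (W+D)) = inner W (M ** W) + 2 * inner D (M ** W) + inner D (M ** D)"
      by (rule q_add[OF Msym])
    show ?thesis unfolding objW_def a b c L_def qD mD
      by (simp add: inner_diff_right algebra_simps)
  qed
  have sig0: "0 \<le> sig" using sig by (metis max.bounded_iff)
  have sigP: "0 \<le> P$a$b + sig" for a b using sig[rule_format, of a b] by (simp add: P_def)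
  have Pdiag: "0 \<le> P$a$a" for a
    by (simp add: P_def matrix_matrix_mult_def transpose_def sum_nonneg)
  have Qn: "nonneg_mat Q"
    unfolding nonneg_mat_def
  proof (intro allI)
    fix a b
    have e: "Q$a$b = (1-lam) * P$a$b + sig + lam * (if a = b then 1 else 0)"
      by (simp add: Q_def J_def ones_mat_def mat_def)
    show "0 \<le> Q$a$b"
    proof (cases "0 \<le> P$a$b")
      case True
      then show ?thesis using e lam sig0 by simp
    next
      case False
      have "lam * P$a$b \<le> 0" using False lam by (simp add: mult_nonneg_nonpos)
      then show ?thesis using e lam sigP[of a b] by (auto simp: algebra_simps split: if_splits)
    qed
  qed
  have KN: "nonneg_mat (P + sig *\<^sub>R J)"
    using sigP by (simp add: nonneg_mat_def J_def ones_mat_def)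
  have Xn: "nonneg_mat X" by (rule X_nonneg)
  have Vn: "nonneg_mat V" by (rule V_nonneg)
  have Un: "nonneg_mat U" by (rule U_nonneg)
  define W where "W = U ** transpose V"
  define NU where "NU = numer_U A X lam sig U V"
  define DU where "DU = denom_U A X lam sig U V"
  define G where "G = transpose V ** V"
  define dU where "dU = mult_update U NU DU - U"
  have hDU: "Q ** U ** G = DU"
    by (simp add: DU_def denom_U_def Q_def G_def P_def J_def mnorm algebra_simps)
  have hNU: "NU = (P + sig *\<^sub>R J) ** X ** V"
    by (simp add: NU_def numer_U_def P_def J_def mnorm)
  have NUn: "nonneg_mat NU" unfolding hNU by (intro nonneg_mul KN Xn Vn)
  have Gsym: "transpose G = G" by (simp add: G_def matrix_transpose_mul)
  have Gn: "nonneg_mat G" unfolding G_def by (intro nonneg_mul Vn nonneg_transpose)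
  have stepU: "2 * inner dU (DU - NU) + inner dU (Q ** dU ** G) \<le> 0"
    using mu_step[OF Qsym Gsym Qn Gn Un, of NU] DU_pos unfolding hDU dU_def DU_def by simp
  have LV: "L W ** V = DU - NU"
    by (simp add: L_def W_def DU_def NU_def denom_U_def numer_U_def M_def P_def J_def mnorm algebra_simps)
  have objU: "objective A X lam sig (mult_update U NU DU) V
      = objective A X lam sig U V + (2 * inner dU (DU - NU) + inner dU (Q ** dU ** G))"
  proof -
    have e1: "mult_update U NU DU ** transpose V = W + dU ** transpose V"
      by (simp add: dU_def W_def mm_add_r[symmetric])
    have e2: "inner (dU ** transpose V) (L W) = inner dU (DU - NU)"
      by (subst adj_r) (simp add: LV)
    have e3: "inner (dU ** transpose V) (Q ** (dU ** transpose V)) = inner dU (Q ** dU ** G)"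
      by (simp add: adj_r G_def matrix_mul_assoc)
    show ?thesis unfolding obj_eq e1 W_def[symmetric] diff e2 e3 by simp
  qed
  have UU: "nonneg_mat (mult_update U NU DU)"
    using DU_pos by (intro nonneg_update Un NUn) (simp add: DU_def)
  define NV where "NV = numer_V A X lam sig U V"
  define DV where "DV = denom_V A X lam sig U V"
  define R where "R = transpose U ** Q ** U"
  define dV where "dV = mult_update V NV DV - V"
  have hDV: "mat 1 ** V ** R = DV"
    by (simp add: DV_def denom_V_def R_def Q_def P_def J_def mnorm algebra_simps)
  have hNV: "NV = transpose X ** (P + sig *\<^sub>R J) ** U"
    by (simp add: NV_def numer_V_def P_def J_def mnorm)
  have NVn: "nonneg_mat NV" unfolding hNV by (intro nonneg_mul KN Un nonneg_transpose Xn)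
  have Rsym: "transpose R = R" by (simp add: R_def matrix_transpose_mul Qsym matrix_mul_assoc)
  have Rn: "nonneg_mat R" unfolding R_def by (intro nonneg_mul Qn Un nonneg_transpose)
  have In: "nonneg_mat (mat 1 :: real^'n^'n)" by (simp add: nonneg_mat_def mat_def)
  have stepV: "2 * inner dV (DV - NV) + inner dV (mat 1 ** dV ** R) \<le> 0"
    using mu_step[OF transpose_mat Rsym In Rn Vn, of NV] DV_pos unfolding hDV dV_def DV_def by simp
  have LU: "transpose (L W) ** U = DV - NV"
    by (simp add: L_def W_def DV_def NV_def denom_V_def numer_V_def M_def P_def J_def mnorm algebra_simps
        transpose_add transpose_diff transpose_scalar matrix_transpose_mul ones_sym)
  have objV: "objective A X lam sig U (mult_update V NV DV)
      = objective A X lam sig U V + (2 * inner dV (DV - NV) + inner dV (mat 1 ** dV ** R))"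
  proof -
    have e1: "U ** transpose (mult_update V NV DV) = W + U ** transpose dV"
      by (simp add: dV_def W_def transpose_diff mm_diff_l)
    have e2: "inner (U ** transpose dV) (L W) = inner dV (DV - NV)"
      by (simp add: adj_l inner_transpose matrix_transpose_mul LU)
    have e3: "inner (U ** transpose dV) (Q ** (U ** transpose dV)) = inner dV (mat 1 ** dV ** R)"
      by (simp add: adj_l inner_transpose matrix_transpose_mul Qsym R_def matrix_mul_assoc)
    show ?thesis unfolding obj_eq e1 W_def[symmetric] diff e2 e3 by simp
  qed
  have VV: "nonneg_mat (mult_update V NV DV)"
    using DV_pos by (intro nonneg_update Vn NVn) (simp add: DV_def)
  show ?thesis using objU objV stepU stepV UU VV unfolding NU_def DU_def NV_def DV_def by simp
qed


end
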